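(* Let $a\neq0$ and $m\neq0$ be real constants. Let $(M_1,g_1)$ be the Gödel spacetime, i.e. $\mathbb{R}^4$ with coordinates $(x,y,z,t)$ and metric $g_1=dt^2+\tfrac12e^{2mx}dy^2-dx^2-dz^2+2e^{mx}\,dt\,dy$, and let $(M_2,g_2)$ be the Som-Raychaudhuri spacetime, i.e. the region $\{r>0\}$ of $\mathbb{R}^4$ with coordinates $(t,\phi,r,z)$ and metric $g_2=(dt+ar^2\,d\phi)^2-r^2\,d\phi^2-dr^2-dz^2$. Then both $(M_1,g_1)$ and $(M_2,g_2)$ are Ricci generalized pseudosymmetric and are manifolds of pseudosymmetric Weyl conformal curvature tensor, and in both of them the Ricci tensor is Riemann compatible, conformal compatible, concircular compatible and conharmonic compatible, and is cyclic parallel but not of Codazzi type.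
   Context: Notation for a semi-Riemannian manifold $(M,g)$ of dimension $n=4$: $\nabla$ Levi-Civita connection, $\mathcal R(X,Y)=[\nabla_X,\nabla_Y]-\nabla_{[X,Y]}$, $R(X_1,X_2,X_3,X_4)=g(\mathcal R(X_1,X_2)X_3,X_4)$, $S$ Ricci tensor, $\kappa$ scalar curvature, $\mathcal S$ Ricci operator. For a symmetric $(0,2)$-tensor $A$, $(X\wedge_AY)Z=A(Y,Z)X-A(X,Z)Y$. Weyl operator $\mathcal C(X,Y)=\mathcal R(X,Y)-\frac{1}{n-2}(X\wedge_g\mathcal SY+\mathcal SX\wedge_gY-\frac{\kappa}{n-1}X\wedge_gY)$, concircular $\mathcal W(X,Y)=\mathcal R(X,Y)-\frac{\kappa}{n(n-1)}X\wedge_gY$, conharmonic $\mathcal K(X,Y)=\mathcal R(X,Y)-\frac{1}{n-2}(X\wedge_g\mathcal SY+\mathcal SX\wedge_gY)$; $C,W,K$ the associated $(0,4)$-tensors ($T(X_1,X_2,X_3,X_4)=g(\mathcal T(X_1,X_2)X_3,X_4)$). For an endomorphism $\mathcal H$ and $(0,k)$-tensor $T$, $(\mathcal H\cdot T)(X_1,\dots,X_k)=-\sum_iT(X_1,\dots,\mathcal HX_i,\dots,X_k)$; $(R\cdot T)(X_1,\dots,X_k,X,Y)=(\mathcal R(X,Y)\cdot T)(X_1,\dots,X_k)$, $C\cdot T$ analogously with $\mathcal C(X,Y)$, and $Q(A,T)(X_1,\dots,X_k,X,Y)=((X\wedge_AY)\cdot T)(X_1,\dots,X_k)$. $M$ is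 Ricci generalized pseudosymmetric if $R\cdot R=L\,Q(S,R)$ for a smooth function $L$. $M$ is a manifold of pseudosymmetric Weyl conformal curvature tensor if $C\cdot C=L\,Q(g,C)$ for a smooth function $L$. The Ricci tensor is of Codazzi type if $(\nabla_{X_1}S)(X_2,X_3)=(\nabla_{X_2}S)(X_1,X_3)$, and cyclic parallel if $(\nabla_{X_1}S)(X_2,X_3)+(\nabla_{X_2}S)(X_3,X_1)+(\nabla_{X_3}S)(X_1,X_2)=0$. A symmetric $(0,2)$-tensor $E$ with endomorphism $\mathcal E$ ($g(\mathcal EX,Y)=E(X,Y)$) is Riemann compatible if $R(\mathcal EX_1,X,X_2,X_3)+R(\mathcal EX_2,X,X_3,X_1)+R(\mathcal EX_3,X,X_1,X_2)=0$; conformal, concircular and conharmonic compatibility are defined with $R$ replaced by $C$, $W$, $K$ respectively. *)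

theory Defs
  imports "HOL-Analysis.Analysis"
begin

text \<open>Coordinate (chart) formalisation of a semi-Riemannian 4-manifold given as an
open region U of R^4 with metric components g p i j (coordinate indices of type 4).
Tangent vectors are represented by their coordinate components (real^4).\<close>

type_synonym pt = "real^4"
type_synonym metric = "pt \<Rightarrow> 4 \<Rightarrow> 4 \<Rightarrow> real"
type_synonym tensor4 = "pt \<Rightarrow> pt \<Rightarrow> pt \<Rightarrow> pt \<Rightarrow> pt \<Rightarrow> real"

definition e :: "4 \<Rightarrow> pt" where "e k = axis k 1"

definition pd :: "4 \<Rightarrow> (pt \<Rightarrow> real) \<Rightarrow> pt \<Rightarrow> real" where
  "pd k f p = deriv (\<lambda>s. f (p + s *\<^sub>R e k)) 0"

fun iter_pd :: "4 list \<Rightarrow> (pt \<Rightarrow> real) \<Rightarrow> pt \<Rightarrow> real" where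
  "iter_pd [] f = f"
| "iter_pd (k # ks) f = pd k (iter_pd ks f)"

definition smooth_on_U :: "pt set \<Rightarrow> (pt \<Rightarrow> real) \<Rightarrow> bool" where
  "smooth_on_U U f \<longleftrightarrow> (\<forall>ks. iter_pd ks f differentiable_on U)"

definition ginv :: "metric \<Rightarrow> pt \<Rightarrow> real^4^4" where
  "ginv g p = matrix_inv (\<chi> i j. g p i j)"

definition gv :: "metric \<Rightarrow> pt \<Rightarrow> pt \<Rightarrow> pt \<Rightarrow> real" where
  "gv g p X Y = (\<Sum>i\<in>UNIV. \<Sum>j\<in>UNIV. g p i j * X$i * Y$j)"

text \<open>Christoffel symbols: Gam g p k i j = Gamma^k_{ij}, so nabla_{d_i} d_j = sum_k Gamma^k_{ij} d_k\<close>
definition Gam :: "metric \<Rightarrow> pt \<Rightarrow> 4 \<Rightarrow> 4 \<Rightarrow> 4 \<Rightarrow> real" where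
  "Gam g p k i j = (1/2) * (\<Sum>l\<in>UNIV. ginv g p $ k $ l *
      (pd i (\<lambda>q. g q j l) p + pd j (\<lambda>q. g q i l) p - pd l (\<lambda>q. g q i j) p))"

text \<open>Rc g p i j k l = l-th component of R(d_i,d_j)d_k, with R(X,Y) = [nabla_X,nabla_Y] - nabla_[X,Y]\<close>
definition Rc :: "metric \<Rightarrow> pt \<Rightarrow> 4 \<Rightarrow> 4 \<Rightarrow> 4 \<Rightarrow> 4 \<Rightarrow> real" where
  "Rc g p i j k l = pd i (\<lambda>q. Gam g q l j k) p - pd j (\<lambda>q. Gam g q l i k) p
     + (\<Sum>m\<in>UNIV. Gam g p m j k * Gam g p l i m - Gam g p m i k * Gam g p l j m)"

definition Rop :: "metric \<Rightarrow> pt \<Rightarrow> pt \<Rightarrow> pt \<Rightarrow> pt \<Rightarrow> pt" where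
  "Rop g p X Y Z = (\<chi> l. \<Sum>i\<in>UNIV. \<Sum>j\<in>UNIV. \<Sum>k\<in>UNIV. Rc g p i j k l * X$i * Y$j * Z$k)"

definition Rt :: "metric \<Rightarrow> tensor4" where
  "Rt g p X1 X2 X3 X4 = gv g p (Rop g p X1 X2 X3) X4"

definition Ric :: "metric \<Rightarrow> pt \<Rightarrow> pt \<Rightarrow> pt \<Rightarrow> real" where
  "Ric g p X Y = (\<Sum>i\<in>UNIV. (Rop g p (e i) X Y) $ i)"

definition Ricop :: "metric \<Rightarrow> pt \<Rightarrow> pt \<Rightarrow> pt" where
  "Ricop g p X = (\<chi> l. \<Sum>k\<in>UNIV. ginv g p $ l $ k * Ric g p (e k) X)"

definition scal :: "metric \<Rightarrow> pt \<Rightarrow> real" where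
  "scal g p = (\<Sum>i\<in>UNIV. \<Sum>j\<in>UNIV. ginv g p $ i $ j * Ric g p (e i) (e j))"

definition wedge :: "(pt \<Rightarrow> pt \<Rightarrow> real) \<Rightarrow> pt \<Rightarrow> pt \<Rightarrow> pt \<Rightarrow> pt" where
  "wedge A X Y Z = A Y Z *\<^sub>R X - A X Z *\<^sub>R Y"

text \<open>Weyl, concircular and conharmonic operators, n = 4\<close>
definition Cop :: "metric \<Rightarrow> pt \<Rightarrow> pt \<Rightarrow> pt \<Rightarrow> pt \<Rightarrow> pt" where
  "Cop g p X Y Z = Rop g p X Y Z - (1/2) *\<^sub>R
     (wedge (gv g p) X (Ricop g p Y) Z + wedge (gv g p) (Ricop g p X) Y Z
      - (scal g p / 3) *\<^sub>R wedge (gv g p) X Y Z)"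

definition Wop :: "metric \<Rightarrow> pt \<Rightarrow> pt \<Rightarrow> pt \<Rightarrow> pt \<Rightarrow> pt" where
  "Wop g p X Y Z = Rop g p X Y Z - (scal g p / 12) *\<^sub>R wedge (gv g p) X Y Z"

definition Kop :: "metric \<Rightarrow> pt \<Rightarrow> pt \<Rightarrow> pt \<Rightarrow> pt \<Rightarrow> pt" where
  "Kop g p X Y Z = Rop g p X Y Z - (1/2) *\<^sub>R
     (wedge (gv g p) X (Ricop g p Y) Z + wedge (gv g p) (Ricop g p X) Y Z)"

definition Ct :: "metric \<Rightarrow> tensor4" where
  "Ct g p X1 X2 X3 X4 = gv g p (Cop g p X1 X2 X3) X4"
definition Wt :: "metric \<Rightarrow> tensor4" where
  "Wt g p X1 X2 X3 X4 = gv g p (Wop g p X1 X2 X3) X4"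
definition Kt :: "metric \<Rightarrow> tensor4" where
  "Kt g p X1 X2 X3 X4 = gv g p (Kop g p X1 X2 X3) X4"

definition dot4 :: "(pt \<Rightarrow> pt) \<Rightarrow> (pt \<Rightarrow> pt \<Rightarrow> pt \<Rightarrow> pt \<Rightarrow> real) \<Rightarrow> pt \<Rightarrow> pt \<Rightarrow> pt \<Rightarrow> pt \<Rightarrow> real" where
  "dot4 H T X1 X2 X3 X4 = - (T (H X1) X2 X3 X4 + T X1 (H X2) X3 X4
                            + T X1 X2 (H X3) X4 + T X1 X2 X3 (H X4))"

definition Qt :: "(pt \<Rightarrow> pt \<Rightarrow> real) \<Rightarrow> (pt \<Rightarrow> pt \<Rightarrow> pt \<Rightarrow> pt \<Rightarrow> real)
                  \<Rightarrow> pt \<Rightarrow> pt \<Rightarrow> pt \<Rightarrow> pt \<Rightarrow> pt \<Rightarrow> pt \<Rightarrow> real" where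
  "Qt A T X1 X2 X3 X4 X Y = dot4 (wedge A X Y) T X1 X2 X3 X4"

definition RdotR :: "metric \<Rightarrow> pt \<Rightarrow> pt \<Rightarrow> pt \<Rightarrow> pt \<Rightarrow> pt \<Rightarrow> pt \<Rightarrow> pt \<Rightarrow> real" where
  "RdotR g p X1 X2 X3 X4 X Y = dot4 (Rop g p X Y) (Rt g p) X1 X2 X3 X4"
definition CdotC :: "metric \<Rightarrow> pt \<Rightarrow> pt \<Rightarrow> pt \<Rightarrow> pt \<Rightarrow> pt \<Rightarrow> pt \<Rightarrow> pt \<Rightarrow> real" where
  "CdotC g p X1 X2 X3 X4 X Y = dot4 (Cop g p X Y) (Ct g p) X1 X2 X3 X4"

definition ricci_gen_pseudosymmetric :: "metric \<Rightarrow> pt set \<Rightarrow> bool" where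
  "ricci_gen_pseudosymmetric g U \<longleftrightarrow> (\<exists>L. smooth_on_U U L \<and>
     (\<forall>p\<in>U. \<forall>X1 X2 X3 X4 X Y. RdotR g p X1 X2 X3 X4 X Y
              = L p * Qt (Ric g p) (Rt g p) X1 X2 X3 X4 X Y))"

definition weyl_pseudosymmetric :: "metric \<Rightarrow> pt set \<Rightarrow> bool" where
  "weyl_pseudosymmetric g U \<longleftrightarrow> (\<exists>L. smooth_on_U U L \<and>
     (\<forall>p\<in>U. \<forall>X1 X2 X3 X4 X Y. CdotC g p X1 X2 X3 X4 X Y
              = L p * Qt (gv g p) (Ct g p) X1 X2 X3 X4 X Y))"

definition nablaRic :: "metric \<Rightarrow> pt \<Rightarrow> pt \<Rightarrow> pt \<Rightarrow> pt \<Rightarrow> real" where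
  "nablaRic g p X1 X2 X3 = (\<Sum>i\<in>UNIV. \<Sum>j\<in>UNIV. \<Sum>k\<in>UNIV. X1$i * X2$j * X3$k *
     (pd i (\<lambda>q. Ric g q (e j) (e k)) p
      - (\<Sum>m\<in>UNIV. Gam g p m i j * Ric g p (e m) (e k))
      - (\<Sum>m\<in>UNIV. Gam g p m i k * Ric g p (e j) (e m))))"

definition ricci_codazzi :: "metric \<Rightarrow> pt set \<Rightarrow> bool" where
  "ricci_codazzi g U \<longleftrightarrow> (\<forall>p\<in>U. \<forall>X1 X2 X3.
     nablaRic g p X1 X2 X3 = nablaRic g p X2 X1 X3)"

definition ricci_cyclic_parallel :: "metric \<Rightarrow> pt set \<Rightarrow> bool" where
  "ricci_cyclic_parallel g U \<longleftrightarrow> (\<forall>p\<in>U. \<forall>X1 X2 X3.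
     nablaRic g p X1 X2 X3 + nablaRic g p X2 X3 X1 + nablaRic g p X3 X1 X2 = 0)"

definition ricci_compatible :: "(metric \<Rightarrow> tensor4) \<Rightarrow> metric \<Rightarrow> pt set \<Rightarrow> bool" where
  "ricci_compatible T g U \<longleftrightarrow> (\<forall>p\<in>U. \<forall>X X1 X2 X3.
     T g p (Ricop g p X1) X X2 X3 + T g p (Ricop g p X2) X X3 X1
     + T g p (Ricop g p X3) X X1 X2 = 0)"

text \<open>Goedel metric, coordinates (x,y,z,t) = indices 0,1,2,3:
  g = dt^2 + 1/2 e^(2mx) dy^2 - dx^2 - dz^2 + 2 e^(mx) dt dy\<close>
definition godel_metric :: "real \<Rightarrow> metric" where
  "godel_metric m p i j =
     (if i = 3 \<and> j = 3 then 1
      else if i = 1 \<and> j = 1 then exp (2 * m * p$0) / 2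
      else if i = 0 \<and> j = 0 then -1
      else if i = 2 \<and> j = 2 then -1
      else if (i = 3 \<and> j = 1) \<or> (i = 1 \<and> j = 3) then exp (m * p$0)
      else 0)"

text \<open>Som-Raychaudhuri metric, coordinates (t,phi,r,z) = indices 0,1,2,3:
  g = (dt + a r^2 dphi)^2 - r^2 dphi^2 - dr^2 - dz^2\<close>
definition som_ray_metric :: "real \<Rightarrow> metric" where
  "som_ray_metric a p i j =
     (if i = 0 \<and> j = 0 then 1
      else if (i = 0 \<and> j = 1) \<or> (i = 1 \<and> j = 0) then a * (p$2)^2
      else if i = 1 \<and> j = 1 then a^2 * (p$2)^4 - (p$2)^2
      else if i = 2 \<and> j = 2 then -1
      else if i = 3 \<and> j = 3 then -1
      else 0)"

end

theory Submission
  imports Defs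
begin

lemma UNIV4: "(UNIV::4 set) = {0,1,2,3}"
proof -
  have "x \<in> {0,1,2,3}" for x :: 4 using exhaust_4[of x] by auto
  then show ?thesis by auto
qed

lemma sum4: "sum f (UNIV::4 set) = f 0 + f 1 + f 2 + f 3"
  unfolding UNIV4 by (simp add: ac_simps)

lemma all4: "(\<forall>i::4. P i) \<longleftrightarrow> P 0 \<and> P 1 \<and> P 2 \<and> P 3"
  by (metis UNIV4 UNIV_I empty_iff insert_iff)

lemma vec4_eq: "(A::pt) = B \<longleftrightarrow> A$0 = B$0 \<and> A$1 = B$1 \<and> A$2 = B$2 \<and> A$3 = B$3"
  by (simp add: vec_eq_iff all4)

lemma matrix_inv_eq:
  fixes A B :: "real^'n^'n"
  assumes "A ** B = mat 1" "B ** A = mat 1"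
  shows "matrix_inv A = B"
proof -
  have ex: "\<exists>A'. A ** A' = mat 1 \<and> A' ** A = mat 1" using assms by blast
  define C where "C = matrix_inv A"
  have C: "A ** C = mat 1 \<and> C ** A = mat 1" unfolding C_def matrix_inv_def by (rule someI_ex[OF ex])
  have "C = C ** (A ** B)" using assms by simp
  also have "\<dots> = (C ** A) ** B" by (simp add: matrix_mul_assoc)
  also have "\<dots> = B" using C by simp
  finally show ?thesis unfolding C_def .
qed

lemma e_nth: "e k $ j = (if j = k then 1 else 0)"
  by (simp add: e_def axis_def)

lemma pd_coord:
  fixes h :: "real \<Rightarrow> real" and S :: "real set"
  assumes S: "open S" and pS: "p$c \<in> S" and f: "\<And>q. q$c \<in> S \<Longrightarrow> f q = h (q$c)"
    and D: "(h has_real_derivative D) (at (p$c))"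
  shows "pd k f p = (if k = c then D else 0)"
proof (cases "k = c")
  case True
  have line: "(p + s *\<^sub>R e k)$c = p$c + s" for s by (simp add: e_nth True)
  define T where "T = {s. p$c + s \<in> S}"
  have T: "open T" unfolding T_def
    by (rule open_vimage[OF S, of "\<lambda>s. p$c + s", unfolded vimage_def]) (auto intro: continuous_intros)
  have T0: "0 \<in> T" using pS by (simp add: T_def)
  have hD: "((\<lambda>s. h (p$c + s)) has_real_derivative D) (at 0)"
    using DERIV_shift[of h D 0 "p$c"] D by (simp add: add.commute)
  have eq: "h (p$c + s) = f (p + s *\<^sub>R e k)" if "s \<in> T" for s
  proof -
    have "(p + s *\<^sub>R e k)$c \<in> S" unfolding line using that by (simp add: T_def)
    then have "f (p + s *\<^sub>R e k) = h ((p + s *\<^sub>R e k)$c)" by (rule f)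
    then show ?thesis unfolding line by simp
  qed
  then have "((\<lambda>s. f (p + s *\<^sub>R e k)) has_real_derivative D) (at 0)"
    by (rule has_field_derivative_transform_within_open[OF hD T T0]) (simp add: eq)
  then show ?thesis unfolding pd_def using True by (simp add: DERIV_imp_deriv)
next
  case False
  have "(p + s *\<^sub>R e k)$c = p$c" for s using False by (simp add: e_nth)
  then have "(\<lambda>s. f (p + s *\<^sub>R e k)) = (\<lambda>s. h (p$c))"
    using f pS by (metis (no_types, lifting))
  then show ?thesis unfolding pd_def using False by simp
qed

lemma iter_pd_const: "iter_pd ks (\<lambda>_. c) = (\<lambda>_. if ks = [] then c else 0)"
proof (induction ks)
  case Nil then show ?case by simp
next
  case (Cons k ks)
  show ?case by (simp add: Cons pd_def)
qed

lemma smooth_const: "smooth_on_U U (\<lambda>_. c)"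
  unfolding smooth_on_U_def iter_pd_const by simp

lemma idx_neq: "(((0::4) = 1) = False)" 
  "(((0::4) = 2) = False)" 
  "(((0::4) = 3) = False)" 
  "(((1::4) = 0) = False)" 
  "(((1::4) = 2) = False)" 
  "(((1::4) = 3) = False)" 
  "(((2::4) = 0) = False)" 
  "(((2::4) = 1) = False)" 
  "(((2::4) = 3) = False)" 
  "(((3::4) = 0) = False)" 
  "(((3::4) = 1) = False)" 
  "(((3::4) = 2) = False)"
  by simp_all

lemmas evs = vec_lambda_beta idx_neq if_True if_False simp_thms mult_zero_left mult_zero_right
  add_0_left add_0_right diff_0 diff_0_right mult_1_left mult_1_right e_nth minus_zero

definition CopM :: "(pt\<Rightarrow>pt\<Rightarrow>pt\<Rightarrow>pt) \<Rightarrow> (pt\<Rightarrow>pt) \<Rightarrow> (pt\<Rightarrow>pt\<Rightarrow>real) \<Rightarrow> real \<Rightarrow> pt\<Rightarrow>pt\<Rightarrow>pt\<Rightarrow>pt" where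
  "CopM Rp Rcc G s X Y Z = Rp X Y Z - (1/2) *\<^sub>R
     (wedge G X (Rcc Y) Z + wedge G (Rcc X) Y Z - (s / 3) *\<^sub>R wedge G X Y Z)"
definition WopM :: "(pt\<Rightarrow>pt\<Rightarrow>pt\<Rightarrow>pt) \<Rightarrow> (pt\<Rightarrow>pt\<Rightarrow>real) \<Rightarrow> real \<Rightarrow> pt\<Rightarrow>pt\<Rightarrow>pt\<Rightarrow>pt" where
  "WopM Rp G s X Y Z = Rp X Y Z - (s / 12) *\<^sub>R wedge G X Y Z"
definition KopM :: "(pt\<Rightarrow>pt\<Rightarrow>pt\<Rightarrow>pt) \<Rightarrow> (pt\<Rightarrow>pt) \<Rightarrow> (pt\<Rightarrow>pt\<Rightarrow>real) \<Rightarrow> pt\<Rightarrow>pt\<Rightarrow>pt\<Rightarrow>pt" where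
  "KopM Rp Rcc G X Y Z = Rp X Y Z - (1/2) *\<^sub>R (wedge G X (Rcc Y) Z + wedge G (Rcc X) Y Z)"
definition TensM :: "(pt\<Rightarrow>pt\<Rightarrow>real) \<Rightarrow> (pt\<Rightarrow>pt\<Rightarrow>pt\<Rightarrow>pt) \<Rightarrow> pt\<Rightarrow>pt\<Rightarrow>pt\<Rightarrow>pt\<Rightarrow>real" where
  "TensM G Op X1 X2 X3 X4 = G (Op X1 X2 X3) X4"

definition wd :: "4 \<Rightarrow> 4 \<Rightarrow> pt \<Rightarrow> pt \<Rightarrow> real" where
  "wd a b X Y = X$a*Y$b - X$b*Y$a"

definition etaS :: "pt \<Rightarrow> pt \<Rightarrow> real" where
  "etaS X Y = X$0*Y$0 - X$1*Y$1 - X$2*Y$2 - X$3*Y$3"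
definition R0S :: "real \<Rightarrow> pt \<Rightarrow> pt \<Rightarrow> pt \<Rightarrow> pt \<Rightarrow> real" where
  "R0S a X Y Z W = a^2 * (wd 0 1 X Y * wd 0 1 Z W + wd 0 2 X Y * wd 0 2 Z W + 3 * (wd 1 2 X Y * wd 1 2 Z W))"
definition Rop0S :: "real \<Rightarrow> pt \<Rightarrow> pt \<Rightarrow> pt \<Rightarrow> pt" where
  "Rop0S a X Y Z = (\<chi> l. if l = 0 then R0S a X Y Z (axis 0 1) else if l = 1 then - R0S a X Y Z (axis 1 1)
      else if l = 2 then - R0S a X Y Z (axis 2 1) else - R0S a X Y Z (axis 3 1))"
definition S0S :: "real \<Rightarrow> pt \<Rightarrow> pt \<Rightarrow> real" where "S0S a X Y = 2*a^2 * (X$0 * Y$0 + X$1*Y$1 + X$2*Y$2)"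
definition Ric0S :: "real \<Rightarrow> pt \<Rightarrow> pt" where
  "Ric0S a X = (\<chi> l. if l = 0 then 2*a^2*X$0 else if l = 1 then -2*a^2*X$1 else if l = 2 then -2*a^2*X$2 else 0)"
definition sc0S :: "real \<Rightarrow> real" where "sc0S a = -2*a^2"

(* Goedel model, coordinates (u,x,w,z), n = m^2/2 *)
definition etaG :: "pt \<Rightarrow> pt \<Rightarrow> real" where
  "etaG X Y = X$0*Y$0 - X$1*Y$1 - 2*(X$2*Y$2) - X$3*Y$3"
definition R0G :: "real \<Rightarrow> pt \<Rightarrow> pt \<Rightarrow> pt \<Rightarrow> pt \<Rightarrow> real" where
  "R0G n X Y Z W = n * (wd 1 0 X Y * wd 1 0 Z W + 2 * (wd 1 2 X Y * wd 1 2 Z W) + 2 * (wd 0 2 X Y * wd 0 2 Z W))"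
definition Rop0G :: "real \<Rightarrow> pt \<Rightarrow> pt \<Rightarrow> pt \<Rightarrow> pt" where
  "Rop0G n X Y Z = (\<chi> l. if l = 0 then n * (wd 1 0 X Y * Z$1) - 2*n*(wd 0 2 X Y * Z$2)
      else if l = 1 then n * (wd 1 0 X Y * Z$0) + 2*n*(wd 1 2 X Y * Z$2)
      else if l = 2 then - n * (wd 1 2 X Y * Z$1) - n*(wd 0 2 X Y * Z$0) else 0)"
definition S0G :: "real \<Rightarrow> pt \<Rightarrow> pt \<Rightarrow> real" where "S0G n X Y = 2 * n * X$0 * Y$0"
definition Ric0G :: "real \<Rightarrow> pt \<Rightarrow> pt" where
  "Ric0G n X = (\<chi> l. if l = 0 then 2*n*X$0 else 0)"
definition sc0G :: "real \<Rightarrow> real" where "sc0G n = 2*n"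

lemmas mdefs = dot4_def Qt_def wedge_def TensM_def CopM_def WopM_def KopM_def wd_def
  etaS_def R0S_def Rop0S_def S0S_def Ric0S_def sc0S_def
  etaG_def R0G_def Rop0G_def S0G_def Ric0G_def sc0G_def


lemma RR_G: "dot4 (Rop0G n X Y) (TensM etaG (Rop0G n)) X1 X2 X3 X4 = 1 * Qt (S0G n) (TensM etaG (Rop0G n)) X1 X2 X3 X4 X Y"
  unfolding mdefs by (simp add: axis_def) algebra
lemma CC_G: "dot4 (CopM (Rop0G n) (Ric0G n) etaG (sc0G n) X Y) (TensM etaG (CopM (Rop0G n) (Ric0G n) etaG (sc0G n))) X1 X2 X3 X4 = (n/3) * Qt etaG (TensM etaG (CopM (Rop0G n) (Ric0G n) etaG (sc0G n))) X1 X2 X3 X4 X Y"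
  unfolding mdefs by (simp add: axis_def) algebra
lemma compR_G: "TensM etaG (Rop0G n) (Ric0G n X1) X X2 X3 + TensM etaG (Rop0G n) (Ric0G n X2) X X3 X1 + TensM etaG (Rop0G n) (Ric0G n X3) X X1 X2 = 0"
  unfolding mdefs by (simp add: axis_def) algebra
lemma compC_G: "TensM etaG (CopM (Rop0G n) (Ric0G n) etaG (sc0G n)) (Ric0G n X1) X X2 X3 + TensM etaG (CopM (Rop0G n) (Ric0G n) etaG (sc0G n)) (Ric0G n X2) X X3 X1 + TensM etaG (CopM (Rop0G n) (Ric0G n) etaG (sc0G n)) (Ric0G n X3) X X1 X2 = 0"
  unfolding mdefs by (simp add: axis_def) algebra
lemma compW_G: "TensM etaG (WopM (Rop0G n) etaG (sc0G n)) (Ric0G n X1) X X2 X3 + TensM etaG (WopM (Rop0G n) etaG (sc0G n)) (Ric0G n X2) X X3 X1 + TensM etaG (WopM (Rop0G n) etaG (sc0G n)) (Ric0G n X3) X X1 X2 = 0"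
  unfolding mdefs by (simp add: axis_def) algebra
lemma compK_G: "TensM etaG (KopM (Rop0G n) (Ric0G n) etaG) (Ric0G n X1) X X2 X3 + TensM etaG (KopM (Rop0G n) (Ric0G n) etaG) (Ric0G n X2) X X3 X1 + TensM etaG (KopM (Rop0G n) (Ric0G n) etaG) (Ric0G n X3) X X1 X2 = 0"
  unfolding mdefs by (simp add: axis_def) algebra
lemma RR_S: "dot4 (Rop0S a X Y) (TensM etaS (Rop0S a)) X1 X2 X3 X4 = 1 * Qt (S0S a) (TensM etaS (Rop0S a)) X1 X2 X3 X4 X Y"
  unfolding mdefs by (simp add: axis_def) algebra
lemma CC_S: "dot4 (CopM (Rop0S a) (Ric0S a) etaS (sc0S a) X Y) (TensM etaS (CopM (Rop0S a) (Ric0S a) etaS (sc0S a))) X1 X2 X3 X4 = (2*a^2/3) * Qt etaS (TensM etaS (CopM (Rop0S a) (Ric0S a) etaS (sc0S a))) X1 X2 X3 X4 X Y"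
  unfolding mdefs by (simp add: axis_def) algebra
lemma compR_S: "TensM etaS (Rop0S a) (Ric0S a X1) X X2 X3 + TensM etaS (Rop0S a) (Ric0S a X2) X X3 X1 + TensM etaS (Rop0S a) (Ric0S a X3) X X1 X2 = 0"
  unfolding mdefs by (simp add: axis_def) algebra
lemma compC_S: "TensM etaS (CopM (Rop0S a) (Ric0S a) etaS (sc0S a)) (Ric0S a X1) X X2 X3 + TensM etaS (CopM (Rop0S a) (Ric0S a) etaS (sc0S a)) (Ric0S a X2) X X3 X1 + TensM etaS (CopM (Rop0S a) (Ric0S a) etaS (sc0S a)) (Ric0S a X3) X X1 X2 = 0"
  unfolding mdefs by (simp add: axis_def) algebra
lemma compW_S: "TensM etaS (WopM (Rop0S a) etaS (sc0S a)) (Ric0S a X1) X X2 X3 + TensM etaS (WopM (Rop0S a) etaS (sc0S a)) (Ric0S a X2) X X3 X1 + TensM etaS (WopM (Rop0S a) etaS (sc0S a)) (Ric0S a X3) X X1 X2 = 0"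
  unfolding mdefs by (simp add: axis_def) algebra
lemma compK_S: "TensM etaS (KopM (Rop0S a) (Ric0S a) etaS) (Ric0S a X1) X X2 X3 + TensM etaS (KopM (Rop0S a) (Ric0S a) etaS) (Ric0S a X2) X X3 X1 + TensM etaS (KopM (Rop0S a) (Ric0S a) etaS) (Ric0S a X3) X X1 X2 = 0"
  unfolding mdefs by (simp add: axis_def) algebra

definition gGT :: "real \<Rightarrow> real \<Rightarrow> 4 \<Rightarrow> 4 \<Rightarrow> real" where
 "gGT m t i j = (if i = 3 \<and> j = 3 then 1
      else if i = 1 \<and> j = 1 then exp (m*t)^2 / 2
      else if i = 0 \<and> j = 0 then -1
      else if i = 2 \<and> j = 2 then -1
      else if (i = 3 \<and> j = 1) \<or> (i = 1 \<and> j = 3) then exp (m * t)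
      else 0)"
definition dgGT :: "real \<Rightarrow> real \<Rightarrow> 4 \<Rightarrow> 4 \<Rightarrow> real" where
 "dgGT m t i j = (if i = 1 \<and> j = 1 then m * exp (m*t)^2
      else if (i = 3 \<and> j = 1) \<or> (i = 1 \<and> j = 3) then m * exp (m * t)
      else 0)"
definition ginvGT :: "real \<Rightarrow> real \<Rightarrow> real^4^4" where
 "ginvGT m t = (\<chi> i j. if i = 0 \<and> j = 0 then -1 else if i = 1 \<and> j = 1 then -2 / exp (m*t)^2
     else if (i = 1 \<and> j = 3) \<or> (i = 3 \<and> j = 1) then 2 / exp (m*t)
     else if i = 2 \<and> j = 2 then -1 else if i = 3 \<and> j = 3 then -1 else 0)"
definition GamGT :: "real \<Rightarrow> real \<Rightarrow> 4 \<Rightarrow> 4 \<Rightarrow> 4 \<Rightarrow> real" where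
 "GamGT m t k i j = (if k = 0 \<and> i = 1 \<and> j = 1 then m * exp (m*t)^2 / 2
     else if k = 0 \<and> ((i = 1 \<and> j = 3) \<or> (i = 3 \<and> j = 1)) then m * exp (m*t) / 2
     else if k = 1 \<and> ((i = 0 \<and> j = 3) \<or> (i = 3 \<and> j = 0)) then - m / exp (m*t)
     else if k = 3 \<and> ((i = 0 \<and> j = 1) \<or> (i = 1 \<and> j = 0)) then m * exp (m*t) / 2
     else if k = 3 \<and> ((i = 0 \<and> j = 3) \<or> (i = 3 \<and> j = 0)) then m
     else 0)"
definition dGamGT :: "real \<Rightarrow> real \<Rightarrow> 4 \<Rightarrow> 4 \<Rightarrow> 4 \<Rightarrow> real" where
 "dGamGT m t k i j = (if k = 0 \<and> i = 1 \<and> j = 1 then m^2 * exp (m*t)^2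
     else if k = 0 \<and> ((i = 1 \<and> j = 3) \<or> (i = 3 \<and> j = 1)) then m^2 * exp (m*t) / 2
     else if k = 1 \<and> ((i = 0 \<and> j = 3) \<or> (i = 3 \<and> j = 0)) then m^2 / exp (m*t)
     else if k = 3 \<and> ((i = 0 \<and> j = 1) \<or> (i = 1 \<and> j = 0)) then m^2 * exp (m*t) / 2
     else 0)"

lemma exp2: "exp (2 * m * x) = exp (m * x :: real) ^ 2"
proof -
  have "2 * m * x = m * x + m * x" by simp
  then show ?thesis by (simp add: power2_eq_square exp_add[symmetric])
qed

lemma godel_gGT: "godel_metric m q i j = gGT m (q$0) i j"
  unfolding godel_metric_def gGT_def exp2 by simp


lemma dgGT: "((\<lambda>t. gGT m t i j) has_real_derivative dgGT m t i j) (at t)"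
proof -
  have "\<forall>i j. ((\<lambda>t. gGT m t i j) has_real_derivative dgGT m t i j) (at t)"
    unfolding all4 gGT_def dgGT_def by (auto intro!: derivative_eq_intros simp: power2_eq_square)
  then show ?thesis by blast
qed


lemma pd_g: "pd k (\<lambda>q. godel_metric m q i j) p = (if k = 0 then dgGT m (p$0) i j else 0)"
  by (rule pd_coord[where S=UNIV and h="\<lambda>t. gGT m t i j"]) (simp_all add: godel_gGT dgGT)

lemma ginv_G: "ginv (godel_metric m) q = ginvGT m (q$0)"
proof -
  have E: "exp (m * q$0) \<noteq> 0" by simp
  show ?thesis unfolding ginv_def
    apply (rule matrix_inv_eq)
    unfolding matrix_matrix_mult_def mat_def vec_eq_iff all4 sum4 ginvGT_def godel_gGT gGT_def
    using E by (simp_all add: field_simps power2_eq_square)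
qed


lemma Gam_G: "Gam (godel_metric m) q k i j = GamGT m (q$0) k i j"
proof -
  have E: "exp (m * q$0) \<noteq> 0" by simp
  have "\<forall>k i j. Gam (godel_metric m) q k i j = GamGT m (q$0) k i j"
    unfolding Gam_def ginv_G pd_g sum4 all4 ginvGT_def dgGT_def GamGT_def
    using E by (simp add: field_simps power2_eq_square)
  then show ?thesis by blast
qed


lemma dGamGT: "((\<lambda>t. GamGT m t k i j) has_real_derivative dGamGT m t k i j) (at t)"
proof -
  have "\<forall>k i j. ((\<lambda>t. GamGT m t k i j) has_real_derivative dGamGT m t k i j) (at t)"
    unfolding all4 GamGT_def dGamGT_def
    by (auto intro!: derivative_eq_intros simp: field_simps power2_eq_square)
  then show ?thesis by blast
qed


lemma pd_Gam_G: "pd i (\<lambda>q. GamGT m (q$0) l j k) p = (if i = 0 then dGamGT m (p$0) l j k else 0)"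
  by (rule pd_coord[where S=UNIV and h="\<lambda>t. GamGT m t l j k"]) (simp_all add: dGamGT)

lemma Rc_G: "Rc (godel_metric m) p i j k l = (if i = 0 then dGamGT m (p$0) l j k else 0)
   - (if j = 0 then dGamGT m (p$0) l i k else 0)
   + (\<Sum>mm\<in>UNIV. GamGT m (p$0) mm j k * GamGT m (p$0) l i mm - GamGT m (p$0) mm i k * GamGT m (p$0) l j mm)"
  unfolding Rc_def Gam_G pd_Gam_G by simp

definition PhiG :: "real \<Rightarrow> real \<Rightarrow> pt \<Rightarrow> pt" where
  "PhiG m t X = (\<chi> i. if i = 0 then X$3 + exp (m*t) * X$1 else if i = 1 then X$0
      else if i = 2 then exp (m*t) * X$1 / 2 else X$2)"

lemma gv_G: "gv (godel_metric m) p X Y = etaG (PhiG m (p$0) X) (PhiG m (p$0) Y)"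
  unfolding gv_def sum4 godel_gGT gGT_def etaG_def PhiG_def
  by (simp add: field_simps power2_eq_square)

definition RcGT :: "real \<Rightarrow> real \<Rightarrow> 4 \<Rightarrow> 4 \<Rightarrow> 4 \<Rightarrow> 4 \<Rightarrow> real" where
 "RcGT m t i j k l = (
     if i = 0 \<and> j = 1 \<and> k = 0 \<and> l = 1 then - (m^2 / 2)
     else if i = 0 \<and> j = 1 \<and> k = 0 \<and> l = 3 then m^2 * exp (m*t)
     else if i = 0 \<and> j = 1 \<and> k = 1 \<and> l = 0 then 3 * m^2 * exp (m*t)^2 / 4
     else if i = 0 \<and> j = 1 \<and> k = 3 \<and> l = 0 then m^2 * exp (m*t) / 2
     else if i = 0 \<and> j = 3 \<and> k = 0 \<and> l = 3 then m^2 / 2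
     else if i = 0 \<and> j = 3 \<and> k = 1 \<and> l = 0 then m^2 * exp (m*t) / 2
     else if i = 0 \<and> j = 3 \<and> k = 3 \<and> l = 0 then m^2 / 2
     else if i = 1 \<and> j = 0 \<and> k = 0 \<and> l = 1 then m^2 / 2
     else if i = 1 \<and> j = 0 \<and> k = 0 \<and> l = 3 then - (m^2 * exp (m*t))
     else if i = 1 \<and> j = 0 \<and> k = 1 \<and> l = 0 then - (3 * m^2 * exp (m*t)^2 / 4)
     else if i = 1 \<and> j = 0 \<and> k = 3 \<and> l = 0 then - (m^2 * exp (m*t) / 2)
     else if i = 1 \<and> j = 3 \<and> k = 1 \<and> l = 1 then m^2 * exp (m*t) / 2
     else if i = 1 \<and> j = 3 \<and> k = 1 \<and> l = 3 then - (m^2 * exp (m*t)^2 / 4)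
     else if i = 1 \<and> j = 3 \<and> k = 3 \<and> l = 1 then m^2 / 2
     else if i = 1 \<and> j = 3 \<and> k = 3 \<and> l = 3 then - (m^2 * exp (m*t) / 2)
     else if i = 3 \<and> j = 0 \<and> k = 0 \<and> l = 3 then - (m^2 / 2)
     else if i = 3 \<and> j = 0 \<and> k = 1 \<and> l = 0 then - (m^2 * exp (m*t) / 2)
     else if i = 3 \<and> j = 0 \<and> k = 3 \<and> l = 0 then - (m^2 / 2)
     else if i = 3 \<and> j = 1 \<and> k = 1 \<and> l = 1 then - (m^2 * exp (m*t) / 2)
     else if i = 3 \<and> j = 1 \<and> k = 1 \<and> l = 3 then m^2 * exp (m*t)^2 / 4
     else if i = 3 \<and> j = 1 \<and> k = 3 \<and> l = 1 then - (m^2 / 2)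
     else if i = 3 \<and> j = 1 \<and> k = 3 \<and> l = 3 then m^2 * exp (m*t) / 2
     else 0)"


lemma RcT_G: "Rc (godel_metric m) p i j k l = RcGT m (p$0) i j k l"
proof -
  have E: "exp (m * p$0) \<noteq> 0" by simp
  have "\<forall>i j k l. Rc (godel_metric m) p i j k l = RcGT m (p$0) i j k l"
    unfolding Rc_G sum4 all4
    apply (simp only: evs GamGT_def dGamGT_def RcGT_def)
    using E by (simp add: field_simps power2_eq_square)
  then show ?thesis by blast
qed

lemma Rop_G: "PhiG m (p$0) (Rop (godel_metric m) p X Y Z) = Rop0G (m^2/2) (PhiG m (p$0) X) (PhiG m (p$0) Y) (PhiG m (p$0) Z)"
proof -
  have E: "exp (m * p$0) \<noteq> 0" by simp
  show ?thesis
  unfolding vec4_eq Rop_def RcT_G sum4 PhiG_def Rop0G_def wd_def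
  apply (simp only: evs RcGT_def)
  using E apply (simp add: field_simps power2_eq_square)
  done
qed

lemma Ric_G: "Ric (godel_metric m) p X Y = S0G (m^2/2) (PhiG m (p$0) X) (PhiG m (p$0) Y)"
proof -
  have E: "exp (m * p$0) \<noteq> 0" by simp
  show ?thesis
  unfolding Ric_def Rop_def RcT_G sum4 PhiG_def S0G_def
  apply (simp only: evs RcGT_def)
  using E apply (simp add: field_simps power2_eq_square)
  done
qed

lemma Ricop_G: "PhiG m (p$0) (Ricop (godel_metric m) p X) = Ric0G (m^2/2) (PhiG m (p$0) X)"
proof -
  have E: "exp (m * p$0) \<noteq> 0" by simp
  show ?thesis
  unfolding vec4_eq Ricop_def Ric_G ginv_G sum4 PhiG_def S0G_def Ric0G_def ginvGT_def
  apply (simp only: evs)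
  using E apply (simp add: field_simps power2_eq_square)
  done
qed
lemma scal_G: "scal (godel_metric m) p = sc0G (m^2/2)"
proof -
  have E: "exp (m * p$0) \<noteq> 0" by simp
  show ?thesis
  unfolding scal_def Ric_G ginv_G sum4 PhiG_def S0G_def sc0G_def ginvGT_def
  apply (simp only: evs)
  using E apply (simp add: field_simps power2_eq_square)
  done
qed

lemma dot4_tr:
  assumes "\<And>A B C D. T A B C D = T0 (Phi A) (Phi B) (Phi C) (Phi D)"
    and "\<And>Z. Phi (H Z) = H0 (Phi Z)"
  shows "dot4 H T X1 X2 X3 X4 = dot4 H0 T0 (Phi X1) (Phi X2) (Phi X3) (Phi X4)"
  unfolding dot4_def assms by simp

locale frame =
  fixes g :: metric and p :: pt and Phi :: "pt \<Rightarrow> pt" and eta :: "pt \<Rightarrow> pt \<Rightarrow> real"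
    and Rop0 :: "pt \<Rightarrow> pt \<Rightarrow> pt \<Rightarrow> pt" and Ric0 :: "pt \<Rightarrow> pt" and S0 :: "pt \<Rightarrow> pt \<Rightarrow> real"
    and s0 :: real
  assumes gv: "gv g p X Y = eta (Phi X) (Phi Y)"
    and rop: "Phi (Rop g p X Y Z) = Rop0 (Phi X) (Phi Y) (Phi Z)"
    and ricop: "Phi (Ricop g p X) = Ric0 (Phi X)"
    and ric: "Ric g p X Y = S0 (Phi X) (Phi Y)"
    and scl: "scal g p = s0"
    and lin_add: "Phi (X + Y) = Phi X + Phi Y"
    and lin_scale: "Phi (c *\<^sub>R X) = c *\<^sub>R Phi X"
begin

lemma lin_diff: "Phi (X - Y) = Phi X - Phi Y"
proof -
  have 1: "Phi (X + (-1) *\<^sub>R Y) = Phi X + (-1) *\<^sub>R Phi Y" by (simp only: lin_add lin_scale)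
  have 2: "X + (-1) *\<^sub>R Y = X - Y" "Phi X + (-1) *\<^sub>R Phi Y = Phi X - Phi Y" by simp_all
  show ?thesis using 1 unfolding 2 .
qed

lemma wedge_tr:
  assumes "\<And>U V. A U V = A0 (Phi U) (Phi V)"
  shows "Phi (wedge A X Y Z) = wedge A0 (Phi X) (Phi Y) (Phi Z)"
  unfolding wedge_def lin_diff lin_scale assms ..

lemma Rt_tr: "Rt g p X1 X2 X3 X4 = TensM eta Rop0 (Phi X1) (Phi X2) (Phi X3) (Phi X4)"
  unfolding Rt_def TensM_def gv rop ..

lemma Cop_tr: "Phi (Cop g p X Y Z) = CopM Rop0 Ric0 eta s0 (Phi X) (Phi Y) (Phi Z)"
  unfolding Cop_def CopM_def lin_diff lin_add lin_scale rop wedge_tr[of "gv g p" eta, OF gv] ricop scl ..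

lemma Wop_tr: "Phi (Wop g p X Y Z) = WopM Rop0 eta s0 (Phi X) (Phi Y) (Phi Z)"
  unfolding Wop_def WopM_def lin_diff lin_add lin_scale rop wedge_tr[of "gv g p" eta, OF gv] ricop scl ..

lemma Kop_tr: "Phi (Kop g p X Y Z) = KopM Rop0 Ric0 eta (Phi X) (Phi Y) (Phi Z)"
  unfolding Kop_def KopM_def lin_diff lin_add lin_scale rop wedge_tr[of "gv g p" eta, OF gv] ricop ..

lemma Ct_tr: "Ct g p X1 X2 X3 X4 = TensM eta (CopM Rop0 Ric0 eta s0) (Phi X1) (Phi X2) (Phi X3) (Phi X4)"
  unfolding Ct_def TensM_def gv Cop_tr ..
lemma Wt_tr: "Wt g p X1 X2 X3 X4 = TensM eta (WopM Rop0 eta s0) (Phi X1) (Phi X2) (Phi X3) (Phi X4)"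
  unfolding Wt_def TensM_def gv Wop_tr ..
lemma Kt_tr: "Kt g p X1 X2 X3 X4 = TensM eta (KopM Rop0 Ric0 eta) (Phi X1) (Phi X2) (Phi X3) (Phi X4)"
  unfolding Kt_def TensM_def gv Kop_tr ..

lemma RR_tr:
  assumes "\<And>X1 X2 X3 X4 X Y. dot4 (Rop0 X Y) (TensM eta Rop0) X1 X2 X3 X4 = L * Qt S0 (TensM eta Rop0) X1 X2 X3 X4 X Y"
  shows "RdotR g p X1 X2 X3 X4 X Y = L * Qt (Ric g p) (Rt g p) X1 X2 X3 X4 X Y"
proof -
  have "RdotR g p X1 X2 X3 X4 X Y = dot4 (Rop0 (Phi X) (Phi Y)) (TensM eta Rop0) (Phi X1) (Phi X2) (Phi X3) (Phi X4)"
    unfolding RdotR_def by (rule dot4_tr[where Phi=Phi]) (rule Rt_tr, rule rop)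
  moreover have "Qt (Ric g p) (Rt g p) X1 X2 X3 X4 X Y = Qt S0 (TensM eta Rop0) (Phi X1) (Phi X2) (Phi X3) (Phi X4) (Phi X) (Phi Y)"
    unfolding Qt_def by (rule dot4_tr[where Phi=Phi]) (rule Rt_tr, rule wedge_tr, rule ric)
  ultimately show ?thesis using assms by simp
qed

lemma CC_tr:
  assumes "\<And>X1 X2 X3 X4 X Y. dot4 (CopM Rop0 Ric0 eta s0 X Y) (TensM eta (CopM Rop0 Ric0 eta s0)) X1 X2 X3 X4
      = L * Qt eta (TensM eta (CopM Rop0 Ric0 eta s0)) X1 X2 X3 X4 X Y"
  shows "CdotC g p X1 X2 X3 X4 X Y = L * Qt (gv g p) (Ct g p) X1 X2 X3 X4 X Y"
proof -
  have "CdotC g p X1 X2 X3 X4 X Y = dot4 (CopM Rop0 Ric0 eta s0 (Phi X) (Phi Y)) (TensM eta (CopM Rop0 Ric0 eta s0)) (Phi X1) (Phi X2) (Phi X3) (Phi X4)"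
    unfolding CdotC_def by (rule dot4_tr[where Phi=Phi]) (rule Ct_tr, rule Cop_tr)
  moreover have "Qt (gv g p) (Ct g p) X1 X2 X3 X4 X Y = Qt eta (TensM eta (CopM Rop0 Ric0 eta s0)) (Phi X1) (Phi X2) (Phi X3) (Phi X4) (Phi X) (Phi Y)"
    unfolding Qt_def by (rule dot4_tr[where Phi=Phi]) (rule Ct_tr, rule wedge_tr, rule gv)
  ultimately show ?thesis using assms by simp
qed

lemma comp_tr:
  assumes T: "\<And>X1 X2 X3 X4. T g p X1 X2 X3 X4 = TensM eta Op (Phi X1) (Phi X2) (Phi X3) (Phi X4)"
    and M: "\<And>X1 X2 X3 X. TensM eta Op (Ric0 X1) X X2 X3 + TensM eta Op (Ric0 X2) X X3 X1 + TensM eta Op (Ric0 X3) X X1 X2 = 0"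
  shows "T g p (Ricop g p X1) X X2 X3 + T g p (Ricop g p X2) X X3 X1 + T g p (Ricop g p X3) X X1 X2 = 0"
  unfolding T ricop by (rule M)

end

lemma PhiG_add: "PhiG m t (X + Y) = PhiG m t X + PhiG m t Y"
  unfolding vec4_eq PhiG_def by (simp add: algebra_simps)
lemma PhiG_scale: "PhiG m t (c *\<^sub>R X) = c *\<^sub>R PhiG m t X"
  unfolding vec4_eq PhiG_def by (simp add: algebra_simps)

lemma frameG: "frame (godel_metric m) p (PhiG m (p$0)) etaG (Rop0G (m^2/2)) (Ric0G (m^2/2)) (S0G (m^2/2)) (sc0G (m^2/2))"
  by unfold_locales (rule gv_G Rop_G Ricop_G Ric_G scal_G PhiG_add PhiG_scale)+

definition RicGT :: "real \<Rightarrow> real \<Rightarrow> 4 \<Rightarrow> 4 \<Rightarrow> real" where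
 "RicGT m t j k = (if j = 1 \<and> k = 1 then m^2 * exp (m*t)^2
     else if (j = 1 \<and> k = 3) \<or> (j = 3 \<and> k = 1) then m^2 * exp (m*t)
     else if j = 3 \<and> k = 3 then m^2 else 0)"
definition dRicGT :: "real \<Rightarrow> real \<Rightarrow> 4 \<Rightarrow> 4 \<Rightarrow> real" where
 "dRicGT m t j k = (if j = 1 \<and> k = 1 then 2 * m^3 * exp (m*t)^2
     else if (j = 1 \<and> k = 3) \<or> (j = 3 \<and> k = 1) then m^3 * exp (m*t) else 0)"

lemma Ric_e_G: "Ric (godel_metric m) q (e j) (e k) = RicGT m (q$0) j k"
proof -
  have "\<forall>j k. Ric (godel_metric m) q (e j) (e k) = RicGT m (q$0) j k"
    unfolding Ric_G all4 S0G_def PhiG_def RicGT_def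
    by (simp only: evs) (simp add: field_simps power2_eq_square)
  then show ?thesis by blast
qed

lemma dRicGT: "((\<lambda>t. RicGT m t j k) has_real_derivative dRicGT m t j k) (at t)"
proof -
  have "\<forall>j k. ((\<lambda>t. RicGT m t j k) has_real_derivative dRicGT m t j k) (at t)"
    unfolding all4 RicGT_def dRicGT_def
    by (simp only: evs) (auto intro!: derivative_eq_intros simp: power2_eq_square power3_eq_cube)
  then show ?thesis by blast
qed

lemma pd_Ric_G: "pd i (\<lambda>q. RicGT m (q$0) j k) p = (if i = 0 then dRicGT m (p$0) j k else 0)"
  by (rule pd_coord[where S=UNIV and h="\<lambda>t. RicGT m t j k"]) (simp_all add: dRicGT)

lemma nab_G: "nablaRic (godel_metric m) p X1 X2 X3 = (\<Sum>i\<in>UNIV. \<Sum>j\<in>UNIV. \<Sum>k\<in>UNIV. X1$i * X2$j * X3$k *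
     ((if i = 0 then dRicGT m (p$0) j k else 0)
      - (\<Sum>mm\<in>UNIV. GamGT m (p$0) mm i j * RicGT m (p$0) mm k)
      - (\<Sum>mm\<in>UNIV. GamGT m (p$0) mm i k * RicGT m (p$0) j mm)))"
  unfolding nablaRic_def Ric_e_G pd_Ric_G Gam_G ..

lemma cyc_G: "ricci_cyclic_parallel (godel_metric m) UNIV"
  unfolding ricci_cyclic_parallel_def
proof (intro ballI allI)
  fix p X1 X2 X3 :: pt
  have E: "exp (m * p$0) \<noteq> 0" by simp
  show "nablaRic (godel_metric m) p X1 X2 X3 + nablaRic (godel_metric m) p X2 X3 X1 + nablaRic (godel_metric m) p X3 X1 X2 = 0"
    unfolding nab_G sum4
    apply (simp only: evs GamGT_def RicGT_def dRicGT_def)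
    using E by (simp add: field_simps power2_eq_square power3_eq_cube)
qed

lemma ncod_G: assumes "m \<noteq> 0" shows "\<not> ricci_codazzi (godel_metric m) UNIV"
proof
  assume "ricci_codazzi (godel_metric m) UNIV"
  then have h: "nablaRic (godel_metric m) 0 (e 0) (e 1) (e 1) = nablaRic (godel_metric m) 0 (e 1) (e 0) (e 1)"
    unfolding ricci_codazzi_def by blast
  have "nablaRic (godel_metric m) 0 (e 0) (e 1) (e 1) = m^3"
    unfolding nab_G sum4
    by (simp only: evs GamGT_def RicGT_def dRicGT_def) (simp add: field_simps power2_eq_square power3_eq_cube)
  moreover have "nablaRic (godel_metric m) 0 (e 1) (e 0) (e 1) = - (m^3 / 2)"
    unfolding nab_G sum4
    by (simp only: evs GamGT_def RicGT_def dRicGT_def) (simp add: field_simps power2_eq_square power3_eq_cube)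
  ultimately have "m^3 = - (m^3/2)" using h by simp
  then have "m^3 = 0" by linarith
  then show False using assms by simp
qed

lemma Godel_all: assumes "m \<noteq> 0" shows
  "ricci_gen_pseudosymmetric (godel_metric m) UNIV \<and> weyl_pseudosymmetric (godel_metric m) UNIV
   \<and> ricci_compatible Rt (godel_metric m) UNIV \<and> ricci_compatible Ct (godel_metric m) UNIV
   \<and> ricci_compatible Wt (godel_metric m) UNIV \<and> ricci_compatible Kt (godel_metric m) UNIV
   \<and> ricci_cyclic_parallel (godel_metric m) UNIV \<and> \<not> ricci_codazzi (godel_metric m) UNIV"
proof (intro conjI)
  show "ricci_gen_pseudosymmetric (godel_metric m) UNIV"
    unfolding ricci_gen_pseudosymmetric_def
    by (rule exI[of _ "\<lambda>_. 1"], intro conjI smooth_const ballI allI) (rule frame.RR_tr[OF frameG RR_G])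
  show "weyl_pseudosymmetric (godel_metric m) UNIV"
    unfolding weyl_pseudosymmetric_def
    by (rule exI[of _ "\<lambda>_. (m^2/2)/3"], intro conjI smooth_const ballI allI) (rule frame.CC_tr[OF frameG CC_G])
  show "ricci_compatible Rt (godel_metric m) UNIV"
    unfolding ricci_compatible_def by (intro ballI allI) (rule frame.comp_tr[OF frameG], rule frame.Rt_tr[OF frameG], rule compR_G)
  show "ricci_compatible Ct (godel_metric m) UNIV"
    unfolding ricci_compatible_def by (intro ballI allI) (rule frame.comp_tr[OF frameG], rule frame.Ct_tr[OF frameG], rule compC_G)
  show "ricci_compatible Wt (godel_metric m) UNIV"
    unfolding ricci_compatible_def by (intro ballI allI) (rule frame.comp_tr[OF frameG], rule frame.Wt_tr[OF frameG], rule compW_G)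
  show "ricci_compatible Kt (godel_metric m) UNIV"
    unfolding ricci_compatible_def by (intro ballI allI) (rule frame.comp_tr[OF frameG], rule frame.Kt_tr[OF frameG], rule compK_G)
  show "ricci_cyclic_parallel (godel_metric m) UNIV" by (rule cyc_G)
  show "\<not> ricci_codazzi (godel_metric m) UNIV" by (rule ncod_G[OF assms])
qed

definition gST :: "real \<Rightarrow> real \<Rightarrow> 4 \<Rightarrow> 4 \<Rightarrow> real" where
 "gST a t i j = (if i = 0 \<and> j = 0 then 1
      else if (i = 0 \<and> j = 1) \<or> (i = 1 \<and> j = 0) then a * t^2
      else if i = 1 \<and> j = 1 then a^2 * t^4 - t^2
      else if i = 2 \<and> j = 2 then -1
      else if i = 3 \<and> j = 3 then -1
      else 0)"
definition dgST :: "real \<Rightarrow> real \<Rightarrow> 4 \<Rightarrow> 4 \<Rightarrow> real" where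
 "dgST a t i j = (if (i = 0 \<and> j = 1) \<or> (i = 1 \<and> j = 0) then 2 * a * t
      else if i = 1 \<and> j = 1 then 4 * a^2 * t^3 - 2 * t
      else 0)"
definition ginvST :: "real \<Rightarrow> real \<Rightarrow> real^4^4" where
 "ginvST a t = (\<chi> i j. if i = 0 \<and> j = 0 then 1 - a^2 * t^2
     else if (i = 0 \<and> j = 1) \<or> (i = 1 \<and> j = 0) then a
     else if i = 1 \<and> j = 1 then - 1 / t^2
     else if i = 2 \<and> j = 2 then -1 else if i = 3 \<and> j = 3 then -1 else 0)"
definition GamST :: "real \<Rightarrow> real \<Rightarrow> 4 \<Rightarrow> 4 \<Rightarrow> 4 \<Rightarrow> real" where
 "GamST a t k i j = (if k = 0 \<and> ((i = 0 \<and> j = 2) \<or> (i = 2 \<and> j = 0)) then a^2 * t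
     else if k = 0 \<and> ((i = 1 \<and> j = 2) \<or> (i = 2 \<and> j = 1)) then a^3 * t^3
     else if k = 1 \<and> ((i = 0 \<and> j = 2) \<or> (i = 2 \<and> j = 0)) then - a / t
     else if k = 1 \<and> ((i = 1 \<and> j = 2) \<or> (i = 2 \<and> j = 1)) then 1 / t - a^2 * t
     else if k = 2 \<and> ((i = 0 \<and> j = 1) \<or> (i = 1 \<and> j = 0)) then a * t
     else if k = 2 \<and> i = 1 \<and> j = 1 then 2 * a^2 * t^3 - t
     else 0)"
definition dGamST :: "real \<Rightarrow> real \<Rightarrow> 4 \<Rightarrow> 4 \<Rightarrow> 4 \<Rightarrow> real" where
 "dGamST a t k i j = (if k = 0 \<and> ((i = 0 \<and> j = 2) \<or> (i = 2 \<and> j = 0)) then a^2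
     else if k = 0 \<and> ((i = 1 \<and> j = 2) \<or> (i = 2 \<and> j = 1)) then 3 * a^3 * t^2
     else if k = 1 \<and> ((i = 0 \<and> j = 2) \<or> (i = 2 \<and> j = 0)) then a / t^2
     else if k = 1 \<and> ((i = 1 \<and> j = 2) \<or> (i = 2 \<and> j = 1)) then - 1 / t^2 - a^2
     else if k = 2 \<and> ((i = 0 \<and> j = 1) \<or> (i = 1 \<and> j = 0)) then a
     else if k = 2 \<and> i = 1 \<and> j = 1 then 6 * a^2 * t^2 - 1
     else 0)"
definition RcST :: "real \<Rightarrow> real \<Rightarrow> 4 \<Rightarrow> 4 \<Rightarrow> 4 \<Rightarrow> 4 \<Rightarrow> real" where
 "RcST a t i j k l = (
     if i = 0 \<and> j = 1 \<and> k = 0 \<and> l = 0 then (a^3 * t^2)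
     else if i = 0 \<and> j = 1 \<and> k = 0 \<and> l = 1 then (- (a^2))
     else if i = 0 \<and> j = 1 \<and> k = 1 \<and> l = 0 then (- (a^2 * t^2) + a^4 * t^4)
     else if i = 0 \<and> j = 1 \<and> k = 1 \<and> l = 1 then (- (a^3 * t^2))
     else if i = 0 \<and> j = 2 \<and> k = 0 \<and> l = 2 then (- (a^2))
     else if i = 0 \<and> j = 2 \<and> k = 1 \<and> l = 2 then (- (a^3 * t^2))
     else if i = 0 \<and> j = 2 \<and> k = 2 \<and> l = 0 then (- (a^2))
     else if i = 1 \<and> j = 0 \<and> k = 0 \<and> l = 0 then (- (a^3 * t^2))
     else if i = 1 \<and> j = 0 \<and> k = 0 \<and> l = 1 then (a^2)
     else if i = 1 \<and> j = 0 \<and> k = 1 \<and> l = 0 then (a^2 * t^2 - a^4 * t^4)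
     else if i = 1 \<and> j = 0 \<and> k = 1 \<and> l = 1 then (a^3 * t^2)
     else if i = 1 \<and> j = 2 \<and> k = 0 \<and> l = 2 then (- (a^3 * t^2))
     else if i = 1 \<and> j = 2 \<and> k = 1 \<and> l = 2 then (- (3 * a^2 * t^2) - a^4 * t^4)
     else if i = 1 \<and> j = 2 \<and> k = 2 \<and> l = 0 then (- (4 * a^3 * t^2))
     else if i = 1 \<and> j = 2 \<and> k = 2 \<and> l = 1 then (3 * a^2)
     else if i = 2 \<and> j = 0 \<and> k = 0 \<and> l = 2 then (a^2)
     else if i = 2 \<and> j = 0 \<and> k = 1 \<and> l = 2 then (a^3 * t^2)
     else if i = 2 \<and> j = 0 \<and> k = 2 \<and> l = 0 then (a^2)
     else if i = 2 \<and> j = 1 \<and> k = 0 \<and> l = 2 then (a^3 * t^2)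
     else if i = 2 \<and> j = 1 \<and> k = 1 \<and> l = 2 then (3 * a^2 * t^2 + a^4 * t^4)
     else if i = 2 \<and> j = 1 \<and> k = 2 \<and> l = 0 then (4 * a^3 * t^2)
     else if i = 2 \<and> j = 1 \<and> k = 2 \<and> l = 1 then (- (3 * a^2))
     else 0)"
definition RicST :: "real \<Rightarrow> real \<Rightarrow> 4 \<Rightarrow> 4 \<Rightarrow> real" where
 "RicST a t j k = (if j = 0 \<and> k = 0 then 2 * a^2
     else if (j = 0 \<and> k = 1) \<or> (j = 1 \<and> k = 0) then 2 * a^3 * t^2
     else if j = 1 \<and> k = 1 then 2 * a^2 * t^2 + 2 * a^4 * t^4
     else if j = 2 \<and> k = 2 then 2 * a^2 else 0)"
definition dRicST :: "real \<Rightarrow> real \<Rightarrow> 4 \<Rightarrow> 4 \<Rightarrow> real" where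
 "dRicST a t j k = (if (j = 0 \<and> k = 1) \<or> (j = 1 \<and> k = 0) then 4 * a^3 * t
     else if j = 1 \<and> k = 1 then 4 * a^2 * t + 8 * a^4 * t^3 else 0)"
definition PhiS :: "real \<Rightarrow> real \<Rightarrow> pt \<Rightarrow> pt" where
  "PhiS a t X = (\<chi> i. if i = 0 then X$0 + a * t^2 * X$1 else if i = 1 then t * X$1
      else if i = 2 then X$2 else X$3)"

lemma pw4: "(x::real)^4 = x*x*x*x"
  by (simp add: power_numeral_reduce power2_eq_square mult.assoc numeral_eq_Suc)

lemma som_gST: "som_ray_metric a q i j = gST a (q$2) i j"
  unfolding som_ray_metric_def gST_def by simp

lemma dgST: "((\<lambda>t. gST a t i j) has_real_derivative dgST a t i j) (at t)"
proof -
  have "\<forall>i j. ((\<lambda>t. gST a t i j) has_real_derivative dgST a t i j) (at t)"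
    unfolding all4 gST_def dgST_def
    by (simp only: evs) (auto intro!: derivative_eq_intros simp: power2_eq_square power3_eq_cube pw4)
  then show ?thesis by blast
qed

lemma pd_gS: "pd k (\<lambda>q. som_ray_metric a q i j) p = (if k = 2 then dgST a (p$2) i j else 0)"
  by (rule pd_coord[where S=UNIV and h="\<lambda>t. gST a t i j"]) (simp_all add: som_gST dgST)

lemma ginv_S: assumes "q$2 \<noteq> 0" shows "ginv (som_ray_metric a) q = ginvST a (q$2)"
  unfolding ginv_def
  apply (rule matrix_inv_eq)
  unfolding matrix_matrix_mult_def mat_def vec_eq_iff all4 sum4 ginvST_def som_gST gST_def
  using assms by (simp_all only: evs) (simp_all add: field_simps power2_eq_square power3_eq_cube pw4)

lemma Gam_S: assumes "q$2 \<noteq> 0" shows "Gam (som_ray_metric a) q k i j = GamST a (q$2) k i j"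
proof -
  have "\<forall>k i j. Gam (som_ray_metric a) q k i j = GamST a (q$2) k i j"
    unfolding Gam_def ginv_S[OF assms] pd_gS sum4 all4 ginvST_def dgST_def GamST_def
    using assms by (simp only: evs) (simp add: field_simps power2_eq_square power3_eq_cube pw4)
  then show ?thesis by blast
qed

lemma dGamST: assumes "t \<noteq> 0" shows "((\<lambda>t. GamST a t k i j) has_real_derivative dGamST a t k i j) (at t)"
proof -
  have "\<forall>k i j. ((\<lambda>t. GamST a t k i j) has_real_derivative dGamST a t k i j) (at t)"
    unfolding all4 GamST_def dGamST_def
    using assms by (simp only: evs) (auto intro!: derivative_eq_intros simp: field_simps power2_eq_square power3_eq_cube pw4)
  then show ?thesis by blast
qed

lemma pd_Gam_S: assumes "p$2 > 0"
  shows "pd i (\<lambda>q. Gam (som_ray_metric a) q l j k) p = (if i = 2 then dGamST a (p$2) l j k else 0)"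
  by (rule pd_coord[where S="{0<..}" and h="\<lambda>t. GamST a t l j k"]) (use assms in \<open>simp_all add: Gam_S dGamST\<close>)

lemma Rc_S: assumes "p$2 > 0" shows "Rc (som_ray_metric a) p i j k l = (if i = 2 then dGamST a (p$2) l j k else 0)
   - (if j = 2 then dGamST a (p$2) l i k else 0)
   + (\<Sum>mm\<in>UNIV. GamST a (p$2) mm j k * GamST a (p$2) l i mm - GamST a (p$2) mm i k * GamST a (p$2) l j mm)"
proof -
  have p: "p$2 \<noteq> 0" using assms by simp
  show ?thesis unfolding Rc_def pd_Gam_S[OF assms] Gam_S[OF p] ..
qed

lemma RcT_S: assumes "p$2 > 0" shows "Rc (som_ray_metric a) p i j k l = RcST a (p$2) i j k l"
proof -
  have p: "p$2 \<noteq> 0" using assms by simp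
  have "\<forall>i j k l. Rc (som_ray_metric a) p i j k l = RcST a (p$2) i j k l"
    unfolding Rc_S[OF assms] sum4 all4
    apply (simp only: evs GamST_def dGamST_def RcST_def)
    using p by (simp add: field_simps power2_eq_square power3_eq_cube pw4)
  then show ?thesis by blast
qed

lemma gv_S: "gv (som_ray_metric a) p X Y = etaS (PhiS a (p$2) X) (PhiS a (p$2) Y)"
  unfolding gv_def sum4 som_gST gST_def etaS_def PhiS_def
  by (simp only: evs) (simp add: field_simps power2_eq_square power3_eq_cube pw4)

lemma Rop_S: assumes "p$2 > 0"
  shows "PhiS a (p$2) (Rop (som_ray_metric a) p X Y Z) = Rop0S a (PhiS a (p$2) X) (PhiS a (p$2) Y) (PhiS a (p$2) Z)"
  unfolding vec4_eq Rop_def RcT_S[OF assms] sum4 PhiS_def Rop0S_def R0S_def wd_def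
  apply (simp only: evs RcST_def axis_def)
  apply (simp add: field_simps power2_eq_square power3_eq_cube pw4)
  done

lemma Ric_S: assumes "p$2 > 0"
  shows "Ric (som_ray_metric a) p X Y = S0S a (PhiS a (p$2) X) (PhiS a (p$2) Y)"
  unfolding Ric_def Rop_def RcT_S[OF assms] sum4 PhiS_def S0S_def
  apply (simp only: evs RcST_def)
  apply (simp add: field_simps power2_eq_square power3_eq_cube pw4)
  done

lemma Ricop_S: assumes "p$2 > 0"
  shows "PhiS a (p$2) (Ricop (som_ray_metric a) p X) = Ric0S a (PhiS a (p$2) X)"
proof -
  have p: "p$2 \<noteq> 0" using assms by simp
  show ?thesis
  unfolding vec4_eq Ricop_def Ric_S[OF assms] ginv_S[OF p] sum4 PhiS_def S0S_def Ric0S_def ginvST_def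
  apply (simp only: evs)
  using p apply (simp add: field_simps power2_eq_square power3_eq_cube pw4)
  done
qed

lemma scal_S: assumes "p$2 > 0" shows "scal (som_ray_metric a) p = sc0S a"
proof -
  have p: "p$2 \<noteq> 0" using assms by simp
  show ?thesis
  unfolding scal_def Ric_S[OF assms] ginv_S[OF p] sum4 PhiS_def S0S_def sc0S_def ginvST_def
  apply (simp only: evs)
  using p apply (simp add: field_simps power2_eq_square power3_eq_cube pw4)
  done
qed

lemma PhiS_add: "PhiS a t (X + Y) = PhiS a t X + PhiS a t Y"
  unfolding vec4_eq PhiS_def by (simp add: algebra_simps)
lemma PhiS_scale: "PhiS a t (c *\<^sub>R X) = c *\<^sub>R PhiS a t X"
  unfolding vec4_eq PhiS_def by (simp add: algebra_simps)

lemma frameS: assumes "p$2 > 0"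
  shows "frame (som_ray_metric a) p (PhiS a (p$2)) etaS (Rop0S a) (Ric0S a) (S0S a) (sc0S a)"
  by unfold_locales (rule gv_S Rop_S[OF assms] Ricop_S[OF assms] Ric_S[OF assms] scal_S[OF assms] PhiS_add PhiS_scale)+

lemma Ric_e_S: assumes "q$2 > 0" shows "Ric (som_ray_metric a) q (e j) (e k) = RicST a (q$2) j k"
proof -
  have "\<forall>j k. Ric (som_ray_metric a) q (e j) (e k) = RicST a (q$2) j k"
    unfolding Ric_S[OF assms] all4 S0S_def PhiS_def RicST_def
    by (simp only: evs) (simp add: field_simps power2_eq_square power3_eq_cube pw4)
  then show ?thesis by blast
qed

lemma dRicST: "((\<lambda>t. RicST a t j k) has_real_derivative dRicST a t j k) (at t)"
proof -
  have "\<forall>j k. ((\<lambda>t. RicST a t j k) has_real_derivative dRicST a t j k) (at t)"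
    unfolding all4 RicST_def dRicST_def
    by (simp only: evs) (auto intro!: derivative_eq_intros simp: field_simps power2_eq_square power3_eq_cube pw4)
  then show ?thesis by blast
qed

lemma pd_Ric_S: assumes "p$2 > 0"
  shows "pd i (\<lambda>q. Ric (som_ray_metric a) q (e j) (e k)) p = (if i = 2 then dRicST a (p$2) j k else 0)"
  by (rule pd_coord[where S="{0<..}" and h="\<lambda>t. RicST a t j k"]) (use assms in \<open>simp_all add: Ric_e_S dRicST\<close>)

lemma nab_S: assumes "p$2 > 0"
  shows "nablaRic (som_ray_metric a) p X1 X2 X3 = (\<Sum>i\<in>UNIV. \<Sum>j\<in>UNIV. \<Sum>k\<in>UNIV. X1$i * X2$j * X3$k *
     ((if i = 2 then dRicST a (p$2) j k else 0)
      - (\<Sum>mm\<in>UNIV. GamST a (p$2) mm i j * RicST a (p$2) mm k)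
      - (\<Sum>mm\<in>UNIV. GamST a (p$2) mm i k * RicST a (p$2) j mm)))"
proof -
  have p: "p$2 \<noteq> 0" using assms by simp
  show ?thesis unfolding nablaRic_def pd_Ric_S[OF assms] Ric_e_S[OF assms] Gam_S[OF p] ..
qed

lemma cyc_S: "ricci_cyclic_parallel (som_ray_metric a) {p. p$2 > 0}"
  unfolding ricci_cyclic_parallel_def
proof (intro ballI allI)
  fix p X1 X2 X3 :: pt
  assume "p \<in> {p. p$2 > 0}"
  then have pp: "p$2 > 0" by simp
  then have p: "p$2 \<noteq> 0" by simp
  show "nablaRic (som_ray_metric a) p X1 X2 X3 + nablaRic (som_ray_metric a) p X2 X3 X1 + nablaRic (som_ray_metric a) p X3 X1 X2 = 0"
    unfolding nab_S[OF pp] sum4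
    apply (simp only: evs GamST_def RicST_def dRicST_def)
    using p by (simp add: field_simps power2_eq_square power3_eq_cube pw4)
qed

lemma ncod_S: assumes "a \<noteq> 0" shows "\<not> ricci_codazzi (som_ray_metric a) {p. p$2 > 0}"
proof
  define p :: pt where "p = e 2"
  have pp: "p$2 > 0" by (simp add: p_def e_nth)
  assume "ricci_codazzi (som_ray_metric a) {p. p$2 > 0}"
  then have h: "nablaRic (som_ray_metric a) p (e 1) (e 0) (e 2) = nablaRic (som_ray_metric a) p (e 0) (e 1) (e 2)"
    unfolding ricci_codazzi_def using pp by blast
  have "nablaRic (som_ray_metric a) p (e 1) (e 0) (e 2) = - 4 * a^3"
    unfolding nab_S[OF pp] sum4
    apply (simp only: evs GamST_def RicST_def dRicST_def)
    by (simp add: p_def e_nth field_simps power2_eq_square power3_eq_cube pw4)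
  moreover have "nablaRic (som_ray_metric a) p (e 0) (e 1) (e 2) = 0"
    unfolding nab_S[OF pp] sum4
    apply (simp only: evs GamST_def RicST_def dRicST_def)
    by (simp add: p_def e_nth field_simps power2_eq_square power3_eq_cube pw4)
  ultimately have "a^3 = 0" using h by simp
  then show False using assms by simp
qed

lemma Som_all: assumes "a \<noteq> 0" shows
  "ricci_gen_pseudosymmetric (som_ray_metric a) {p. p$2 > 0} \<and> weyl_pseudosymmetric (som_ray_metric a) {p. p$2 > 0}
   \<and> ricci_compatible Rt (som_ray_metric a) {p. p$2 > 0} \<and> ricci_compatible Ct (som_ray_metric a) {p. p$2 > 0}
   \<and> ricci_compatible Wt (som_ray_metric a) {p. p$2 > 0} \<and> ricci_compatible Kt (som_ray_metric a) {p. p$2 > 0}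
   \<and> ricci_cyclic_parallel (som_ray_metric a) {p. p$2 > 0} \<and> \<not> ricci_codazzi (som_ray_metric a) {p. p$2 > 0}"
proof (intro conjI)
  show "ricci_gen_pseudosymmetric (som_ray_metric a) {p. p$2 > 0}"
    unfolding ricci_gen_pseudosymmetric_def
    by (rule exI[of _ "\<lambda>_. 1"], intro conjI smooth_const ballI allI) (rule frame.RR_tr[OF frameS RR_S], simp)
  show "weyl_pseudosymmetric (som_ray_metric a) {p. p$2 > 0}"
    unfolding weyl_pseudosymmetric_def
    by (rule exI[of _ "\<lambda>_. 2*a^2/3"], intro conjI smooth_const ballI allI) (rule frame.CC_tr[OF frameS CC_S], simp)
  show "ricci_compatible Rt (som_ray_metric a) {p. p$2 > 0}"
    unfolding ricci_compatible_def
    by (intro ballI allI) (rule frame.comp_tr[OF frameS], simp, rule frame.Rt_tr[OF frameS], simp, rule compR_S)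
  show "ricci_compatible Ct (som_ray_metric a) {p. p$2 > 0}"
    unfolding ricci_compatible_def
    by (intro ballI allI) (rule frame.comp_tr[OF frameS], simp, rule frame.Ct_tr[OF frameS], simp, rule compC_S)
  show "ricci_compatible Wt (som_ray_metric a) {p. p$2 > 0}"
    unfolding ricci_compatible_def
    by (intro ballI allI) (rule frame.comp_tr[OF frameS], simp, rule frame.Wt_tr[OF frameS], simp, rule compW_S)
  show "ricci_compatible Kt (som_ray_metric a) {p. p$2 > 0}"
    unfolding ricci_compatible_def
    by (intro ballI allI) (rule frame.comp_tr[OF frameS], simp, rule frame.Kt_tr[OF frameS], simp, rule compK_S)
  show "ricci_cyclic_parallel (som_ray_metric a) {p. p$2 > 0}" by (rule cyc_S)
  show "\<not> ricci_codazzi (som_ray_metric a) {p. p$2 > 0}" by (rule ncod_S[OF assms])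
qed

theorem mainTheorem3:
  fixes a m :: real
  assumes "a \<noteq> 0" and "m \<noteq> 0"
  shows "(let g = godel_metric m; U = (UNIV :: pt set) in
            ricci_gen_pseudosymmetric g U \<and> weyl_pseudosymmetric g U
          \<and> ricci_compatible Rt g U \<and> ricci_compatible Ct g U
          \<and> ricci_compatible Wt g U \<and> ricci_compatible Kt g U
          \<and> ricci_cyclic_parallel g U \<and> \<not> ricci_codazzi g U)
       \<and> (let g = som_ray_metric a; U = {p :: pt. p$2 > 0} in
            ricci_gen_pseudosymmetric g U \<and> weyl_pseudosymmetric g U
          \<and> ricci_compatible Rt g U \<and> ricci_compatible Ct g U
          \<and> ricci_compatible Wt g U \<and> ricci_compatible Kt g U
          \<and> ricci_cyclic_parallel g U \<and> \<not> ricci_codazzi g U)"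
proof -
  have G: "ricci_gen_pseudosymmetric (godel_metric m) UNIV \<and> weyl_pseudosymmetric (godel_metric m) UNIV
   \<and> ricci_compatible Rt (godel_metric m) UNIV \<and> ricci_compatible Ct (godel_metric m) UNIV
   \<and> ricci_compatible Wt (godel_metric m) UNIV \<and> ricci_compatible Kt (godel_metric m) UNIV
   \<and> ricci_cyclic_parallel (godel_metric m) UNIV \<and> \<not> ricci_codazzi (godel_metric m) UNIV"
    by (rule Godel_all[OF assms(2)])
  have S: "ricci_gen_pseudosymmetric (som_ray_metric a) {p. p$2 > 0} \<and> weyl_pseudosymmetric (som_ray_metric a) {p. p$2 > 0}
   \<and> ricci_compatible Rt (som_ray_metric a) {p. p$2 > 0} \<and> ricci_compatible Ct (som_ray_metric a) {p. p$2 > 0}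
   \<and> ricci_compatible Wt (som_ray_metric a) {p. p$2 > 0} \<and> ricci_compatible Kt (som_ray_metric a) {p. p$2 > 0}
   \<and> ricci_cyclic_parallel (som_ray_metric a) {p. p$2 > 0} \<and> \<not> ricci_codazzi (som_ray_metric a) {p. p$2 > 0}"
    by (rule Som_all[OF assms(1)])
  show ?thesis unfolding Let_def using G S by blast
qed

end
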